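(* Let $B$ be a nonzero real vector space, $\lfloor\cdot,\cdot\rfloor$ a symmetric bilinear form on $B$, $q(b):=\tfrac12\lfloor b,b\rfloor$, let $f$ be a BC--function on $B$ and $c\in B$. Define $f_c\colon B\to\,]{-}\infty,\infty]$ by $f_c(b):=f(b+c)-\lfloor b,c\rfloor-q(c)$. Then $f_c$ is a BC--function, $\mathrm{dom}\,f_c=\mathrm{dom}\,f-c$ and ${\cal P}_q(f_c)={\cal P}_q(f)-c$.
   Context: For a proper convex $f\colon B\to\,]{-}\infty,\infty]$, $\mathrm{dom}\,f:=\{b\colon f(b)\in\mathbb{R}\}$ and $f^@(c):=\sup_{b\in B}[\lfloor b,c\rfloor-f(b)]$. A BC--function is a proper convex $f$ with $f^@(b)\ge f(b)\ge q(b)$ for all $b\in B$. For $h\ge q$, ${\cal P}_q(h):=\{b\colon h(b)=q(b)\}$. *)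

theory Defs
  imports "HOL-Analysis.Analysis"
begin

text \<open>Functions B \<rightarrow> ]-\<infinity>,\<infinity>] are modelled as ereal-valued functions that never take -\<infinity>.
  The symmetric bilinear form is a parameter bl.\<close>

definition qf :: "('a \<Rightarrow> 'a \<Rightarrow> real) \<Rightarrow> 'a \<Rightarrow> real" where
  "qf bl b = bl b b / 2"

definition proper_convex :: "('a::real_vector \<Rightarrow> ereal) \<Rightarrow> bool" where
  "proper_convex f \<longleftrightarrow>
     (\<forall>b. f b \<noteq> -\<infinity>) \<and> (\<exists>b. f b \<noteq> \<infinity>) \<and>
     (\<forall>x y t. 0 < t \<and> t < 1 \<longrightarrow>
        f ((1 - t) *\<^sub>R x + t *\<^sub>R y) \<le> ereal (1 - t) * f x + ereal t * f y)"

definition edom :: "('a \<Rightarrow> ereal) \<Rightarrow> 'a set" where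
  "edom f = {b. f b \<noteq> \<infinity> \<and> f b \<noteq> -\<infinity>}"

definition fconj :: "('a \<Rightarrow> 'a \<Rightarrow> real) \<Rightarrow> ('a \<Rightarrow> ereal) \<Rightarrow> 'a \<Rightarrow> ereal" where
  "fconj bl f c = (SUP b. ereal (bl b c) - f b)"

definition BC_function :: "('a::real_vector \<Rightarrow> 'a \<Rightarrow> real) \<Rightarrow> ('a \<Rightarrow> ereal) \<Rightarrow> bool" where
  "BC_function bl f \<longleftrightarrow> proper_convex f \<and>
     (\<forall>b. fconj bl f b \<ge> f b \<and> f b \<ge> ereal (qf bl b))"

definition Pq :: "('a \<Rightarrow> 'a \<Rightarrow> real) \<Rightarrow> ('a \<Rightarrow> ereal) \<Rightarrow> 'a set" where
  "Pq bl h = {b. h b = ereal (qf bl b)}"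

end

theory Submission
  imports Defs
begin

lemma ereal_sub2: "(a::ereal) - ereal x - ereal y = a - ereal (x + y)"
  by (cases a) auto

lemma convex_step:
  fixes A B :: ereal and s t u v :: real
  assumes "A \<noteq> -\<infinity>" "B \<noteq> -\<infinity>" "0 < t" "t < 1"
    and "F \<le> ereal (1 - t) * A + ereal t * B"
  shows "F - ereal ((1 - t) * u + t * v) \<le> ereal (1 - t) * (A - ereal u) + ereal t * (B - ereal v)"
proof (cases "A = \<infinity> \<or> B = \<infinity>")
  case True
  then have "ereal (1 - t) * (A - ereal u) + ereal t * (B - ereal v) = \<infinity>"
  proof (cases "A = \<infinity>")
    case True
    then have "ereal (1 - t) * (A - ereal u) = \<infinity>" using assms by simp
    moreover have "ereal t * (B - ereal v) \<noteq> -\<infinity>" using assms by (cases B) auto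
    ultimately show ?thesis by simp
  next
    case False
    then have "B = \<infinity>" using \<open>A = \<infinity> \<or> B = \<infinity>\<close> by simp
    then have "ereal t * (B - ereal v) = \<infinity>" using assms by simp
    moreover have "ereal (1 - t) * (A - ereal u) \<noteq> -\<infinity>" using assms by (cases A) auto
    ultimately show ?thesis by simp
  qed
  then show ?thesis by (metis ereal_less_eq(1))
next
  case False
  then obtain a b where ab: "A = ereal a" "B = ereal b" using assms by (cases A; cases B; auto)
  then have "F \<le> ereal ((1-t)*a + t*b)" using assms by simp
  then show ?thesis using ab by (cases F) (auto simp: algebra_simps)
qed

theorem lemma3p13:
  fixes bl :: "'a::real_vector \<Rightarrow> 'a \<Rightarrow> real"
    and f :: "'a \<Rightarrow> ereal" and c :: 'a
  assumes "\<exists>b::'a. b \<noteq> 0"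
    and "bilinear bl"
    and "\<forall>x y. bl x y = bl y x"
    and "BC_function bl f"
  shows "BC_function bl (\<lambda>b. f (b + c) - ereal (bl b c) - ereal (qf bl c))
       \<and> edom (\<lambda>b. f (b + c) - ereal (bl b c) - ereal (qf bl c)) = (\<lambda>b. b - c) ` edom f
       \<and> Pq bl (\<lambda>b. f (b + c) - ereal (bl b c) - ereal (qf bl c)) = (\<lambda>b. b - c) ` Pq bl f"
proof -
  define g where "g = (\<lambda>b. f (b + c) - ereal (bl b c) - ereal (qf bl c))"
  have bil: "bilinear bl" by fact
  have sym: "\<And>x y. bl x y = bl y x" using assms(3) by auto
  have pc: "proper_convex f" and fq: "\<And>b. fconj bl f b \<ge> f b" "\<And>b. f b \<ge> ereal (qf bl b)"
    using assms(4) unfolding BC_function_def by auto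
  have ninf: "\<And>b. f b \<noteq> -\<infinity>" using pc unfolding proper_convex_def by auto
  have qexp: "qf bl (b + c) = qf bl b + bl b c + qf bl c" for b
    unfolding qf_def using bilinear_ladd[OF bil] bilinear_radd[OF bil] sym[of c b]
    by (simp add: field_simps)
  have g2: "g b = f (b + c) - ereal (bl b c + qf bl c)" for b
    unfolding g_def by (simp add: ereal_sub2)
  have gq: "g b - ereal (qf bl b) = f (b + c) - ereal (qf bl (b + c))" for b
    unfolding g2 qexp by (cases "f (b + c)") (auto simp: algebra_simps)
  have gfin: "g b \<noteq> \<infinity> \<longleftrightarrow> f (b + c) \<noteq> \<infinity>" for b
    unfolding g2 by (cases "f (b + c)") auto
  have gninf: "g b \<noteq> -\<infinity>" for b
    unfolding g2 using ninf[of "b+c"] by (cases "f (b + c)") auto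
  have img: "x \<in> (\<lambda>b. b - c) ` S \<longleftrightarrow> x + c \<in> S" for x and S :: "'a set"
    by (auto simp: image_iff intro!: bexI[of _ "x + c"])
  have pcg: "proper_convex g"
    unfolding proper_convex_def
  proof (intro conjI allI impI)
    show "g b \<noteq> -\<infinity>" for b by (rule gninf)
    obtain b where "f b \<noteq> \<infinity>" using pc unfolding proper_convex_def by auto
    then show "\<exists>b. g b \<noteq> \<infinity>" using gfin[of "b - c"] by auto
  next
    fix x y and t :: real assume t: "0 < t \<and> t < 1"
    have e: "(1 - t) *\<^sub>R x + t *\<^sub>R y + c = (1 - t) *\<^sub>R (x + c) + t *\<^sub>R (y + c)"
      by (simp add: algebra_simps)
    have F: "f ((1 - t) *\<^sub>R x + t *\<^sub>R y + c) \<le> ereal (1 - t) * f (x + c) + ereal t * f (y + c)"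
      unfolding e using pc t unfolding proper_convex_def by blast
    have L: "bl ((1 - t) *\<^sub>R x + t *\<^sub>R y) c + qf bl c
        = (1 - t) * (bl x c + qf bl c) + t * (bl y c + qf bl c)"
      using bilinear_ladd[OF bil, of "(1 - t) *\<^sub>R x" "t *\<^sub>R y" c]
        bilinear_lmul[OF bil, of "1 - t" x c] bilinear_lmul[OF bil, of t y c]
      by (simp add: algebra_simps)
    show "g ((1 - t) *\<^sub>R x + t *\<^sub>R y) \<le> ereal (1 - t) * g x + ereal t * g y"
      unfolding g2 L using convex_step[OF ninf ninf _ _ F] t by auto
  qed
  have gge: "g b \<ge> ereal (qf bl b)" for b
  proof -
    have "f (b + c) - ereal (qf bl (b + c)) \<ge> 0"
      using fq(2)[of "b + c"] by (cases "f (b+c)") auto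
    then have "g b - ereal (qf bl b) \<ge> 0" using gq by simp
    then show ?thesis using gninf[of b] by (cases "g b") auto
  qed
  have gconj: "fconj bl g d \<ge> g d" for d
  proof -
    define K where "K = bl c d + qf bl c"
    have trm: "ereal (bl e (d + c)) - f e - ereal K = ereal (bl (e - c) d) - g (e - c)" for e
    proof -
      have "bl (e - c) d + bl (e - c) c + qf bl c = bl e (d + c) - K"
        unfolding K_def qf_def using bilinear_lsub[OF bil, of e c d] bilinear_lsub[OF bil, of e c c]
          bilinear_radd[OF bil, of e d c] sym[of e c] sym[of c d]
        by (simp add: algebra_simps)
      then show ?thesis unfolding g2 using ninf[of e] by (cases "f e") (auto simp: algebra_simps)
    qed
    have "ereal (bl e (d + c)) - f e \<le> fconj bl g d + ereal K" for e
    proof -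
      have "ereal (bl (e - c) d) - g (e - c) \<le> fconj bl g d"
        unfolding fconj_def by (rule SUP_upper) auto
      then have "ereal (bl e (d + c)) - f e - ereal K \<le> fconj bl g d" using trm by simp
      then show ?thesis by (simp add: ereal_minus_le_iff add.commute)
    qed
    then have "fconj bl f (d + c) \<le> fconj bl g d + ereal K"
      unfolding fconj_def by (rule SUP_least)
    then have "f (d + c) \<le> fconj bl g d + ereal K" using fq(1)[of "d+c"] by simp
    then have "f (d + c) - ereal K \<le> fconj bl g d" by (simp add: ereal_minus_le_iff add.commute)
    moreover have "g d = f (d + c) - ereal K" unfolding g2 K_def using sym[of d c] by simp
    ultimately show ?thesis by simp
  qed
  have BC: "BC_function bl g" unfolding BC_function_def using pcg gconj gge by auto
  have D: "edom g = (\<lambda>b. b - c) ` edom f"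
    unfolding edom_def using gfin gninf ninf img by auto
  have P: "Pq bl g = (\<lambda>b. b - c) ` Pq bl f"
  proof -
    have "g b = ereal (qf bl b) \<longleftrightarrow> f (b + c) = ereal (qf bl (b + c))" for b
      unfolding g2 qexp using ninf[of "b+c"] by (cases "f (b + c)") (auto simp: algebra_simps)
    then show ?thesis unfolding Pq_def using img by auto
  qed
  show ?thesis using BC D P unfolding g_def by simp
qed

end
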